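(* Let $R>1$, $\Omega=[-R,-1]\cup[1,R]\subset\mathbb{R}$, $h>0$, and for $x\in\mathbb{R}$ let $A_\Omega^{(h)}(x)=\int_\Omega\frac{h}{(y-x)^2+h^2}\,dy$. Then: (1) if $0<h<\sqrt{R+(R+1)\sqrt{R}}$, the maximizers of $A_\Omega^{(h)}$ over $\mathbb{R}$ are exactly the two points $$x_\pm=\pm\sqrt{\sqrt{R\left((R+1)^2+4h^2\right)}-(R+h^2)};$$ (2) if $h\ge\sqrt{R+(R+1)\sqrt{R}}$, then $x=0$ is the unique maximizer of $A_\Omega^{(h)}$ over $\mathbb{R}$. *)

theory Defs
  imports "HOL-Analysis.Analysis"
begin

definition Omega :: "real \<Rightarrow> real set" where
  "Omega R = {-R..-1} \<union> {1..R}"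

definition A_Omega :: "real \<Rightarrow> real \<Rightarrow> real \<Rightarrow> real" where
  "A_Omega R h x = (LINT y:Omega R|lborel. h / ((y - x)\<^sup>2 + h\<^sup>2))"

definition maximizers :: "(real \<Rightarrow> real) \<Rightarrow> real set" where
  "maximizers f = {x. \<forall>y. f y \<le> f x}"

end

theory Submission
  imports Defs
begin

lemma deriv_F:
  fixes h x y :: real assumes "h > 0"
  shows "((\<lambda>y. arctan ((y - x)/h)) has_real_derivative h / ((y - x)\<^sup>2 + h\<^sup>2)) (at y)"
proof -
  have "((\<lambda>y. arctan ((y - x)/h)) has_real_derivative (1 / (1 + ((y - x)/h)\<^sup>2)) * (1/h)) (at y)"
    using assms by (auto intro!: derivative_eq_intros simp: field_simps)
  moreover have "(1 / (1 + ((y - x)/h)\<^sup>2)) * (1/h) = h / ((y - x)\<^sup>2 + h\<^sup>2)"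
    using assms by (simp add: field_simps power2_eq_square)
  ultimately show ?thesis by simp
qed

lemma cont_f: fixes h x :: real assumes "h > 0"
  shows "continuous_on S (\<lambda>y. h / ((y - x)\<^sup>2 + h\<^sup>2))"
  using assms by (intro continuous_intros) (auto simp: add_pos_pos)

lemma int_Icc:
  fixes h x a b :: real assumes "h > 0" "a \<le> b"
  shows "(LINT y:{a..b}|lborel. h / ((y - x)\<^sup>2 + h\<^sup>2)) = arctan ((b - x)/h) - arctan ((a - x)/h)"
  unfolding set_lebesgue_integral_def
  apply (rule integral_FTC_atLeastAtMost[OF assms(2)])
  using deriv_F[OF assms(1)] cont_f[OF assms(1)]
  by (auto simp: has_real_derivative_iff_has_vector_derivative[symmetric] intro: has_field_derivative_at_within)

definition G :: "real \<Rightarrow> real \<Rightarrow> real \<Rightarrow> real" where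
  "G R h x = arctan ((R - x)/h) - arctan ((1 - x)/h) + arctan ((-1 - x)/h) - arctan ((-R - x)/h)"

lemma A_eq: assumes "R > 1" "h > 0" shows "A_Omega R h x = G R h x"
proof -
  have "A_Omega R h x = (LINT y:{-R..-1}|lborel. h / ((y - x)\<^sup>2 + h\<^sup>2)) + (LINT y:{1..R}|lborel. h / ((y - x)\<^sup>2 + h\<^sup>2))"
    unfolding A_Omega_def Omega_def
    apply (rule set_integral_Un)
    using assms by (auto intro!: borel_integrable_atLeastAtMost' cont_f)
  also have "\<dots> = G R h x" using assms by (simp add: int_Icc G_def)
  finally show ?thesis .
qed

definition D :: "real \<Rightarrow> real \<Rightarrow> real \<Rightarrow> real" where
  "D R h x = 4*h*x*(R-1)*(R*((R+1)\<^sup>2+4*h\<^sup>2) - (x\<^sup>2+h\<^sup>2+R)\<^sup>2) /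
     ((((1-x)\<^sup>2+h\<^sup>2)*((1+x)\<^sup>2+h\<^sup>2)) * (((R-x)\<^sup>2+h\<^sup>2)*((R+x)\<^sup>2+h\<^sup>2)))"

lemma pos_den: "(h::real) > 0 \<Longrightarrow> t\<^sup>2 + h\<^sup>2 > 0"
  by (simp add: add_nonneg_pos)

lemma G_deriv: assumes "h > 0" shows "(G R h has_real_derivative D R h x) (at x)"
proof -
  have d1: "(G R h has_real_derivative
     (- h/((R-x)\<^sup>2+h\<^sup>2) + h/((1-x)\<^sup>2+h\<^sup>2) - h/((-1-x)\<^sup>2+h\<^sup>2) + h/((-R-x)\<^sup>2+h\<^sup>2))) (at x)"
  proof -
    have dA: "\<And>b. ((\<lambda>x. arctan ((b - x)/h)) has_real_derivative - h/((b-x)\<^sup>2+h\<^sup>2)) (at x)"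
    proof -
      fix b
      have "((\<lambda>x. arctan ((b - x)/h)) has_real_derivative (1 / (1 + ((b - x)/h)\<^sup>2)) * (-1/h)) (at x)"
        using assms by (auto intro!: derivative_eq_intros simp: field_simps)
      moreover have "(1 / (1 + ((b - x)/h)\<^sup>2)) * (-1/h) = - h/((b-x)\<^sup>2+h\<^sup>2)"
        using assms by (simp add: field_simps power2_eq_square)
      ultimately show "((\<lambda>x. arctan ((b - x)/h)) has_real_derivative - h/((b-x)\<^sup>2+h\<^sup>2)) (at x)" by simp
    qed
    have "((\<lambda>x. arctan ((R - x)/h) - arctan ((1 - x)/h) + arctan ((-1 - x)/h) - arctan ((-R - x)/h)) has_real_derivative
       (- h/((R-x)\<^sup>2+h\<^sup>2) - (- h/((1-x)\<^sup>2+h\<^sup>2)) + (- h/((-1-x)\<^sup>2+h\<^sup>2)) - (- h/((-R-x)\<^sup>2+h\<^sup>2)))) (at x)"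
      by (intro DERIV_diff DERIV_add dA)
    then show ?thesis unfolding G_def[abs_def] by simp
  qed
  have e: "- h/((R-x)\<^sup>2+h\<^sup>2) + h/((1-x)\<^sup>2+h\<^sup>2) - h/((-1-x)\<^sup>2+h\<^sup>2) + h/((-R-x)\<^sup>2+h\<^sup>2) = D R h x"
  proof -
    define a where "a = (R-x)\<^sup>2+h\<^sup>2"
    define b where "b = (1-x)\<^sup>2+h\<^sup>2"
    define c where "c = (1+x)\<^sup>2+h\<^sup>2"
    define d where "d = (R+x)\<^sup>2+h\<^sup>2"
    have p: "a > 0" "b > 0" "c > 0" "d > 0"
      using assms unfolding a_def b_def c_def d_def by (auto intro: pos_den)
    have q: "(-1-x)\<^sup>2 = (1+x)\<^sup>2" "(-R-x)\<^sup>2 = (R+x)\<^sup>2" by (simp_all add: power2_eq_square algebra_simps)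
    have cb: "c - b = 4*x" unfolding b_def c_def by (simp add: power2_eq_square algebra_simps)
    have ad: "a - d = -4*R*x" unfolding a_def d_def by (simp add: power2_eq_square algebra_simps)
    have poly: "a*d - R*(b*c) = (R-1)*(R*((R+1)\<^sup>2+4*h\<^sup>2) - (x\<^sup>2+h\<^sup>2+R)\<^sup>2)"
      unfolding a_def b_def c_def d_def by (simp add: power2_eq_square algebra_simps)
    have "- h/a + h/b - h/c + h/d = h*(c-b)/(b*c) + h*(a-d)/(a*d)"
      using p by (simp add: field_simps)
    also have "\<dots> = 4*h*x*(a*d - R*(b*c)) / ((b*c)*(a*d))"
      unfolding cb ad using p by (simp add: field_simps)
    also have "\<dots> = 4*h*x*((R-1)*(R*((R+1)\<^sup>2+4*h\<^sup>2) - (x\<^sup>2+h\<^sup>2+R)\<^sup>2)) / ((b*c)*(a*d))"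
      by (simp only: poly)
    also have "\<dots> = D R h x" unfolding D_def a_def b_def c_def d_def by (simp add: mult.assoc)
    finally show ?thesis unfolding q a_def b_def c_def d_def .
  qed
  show ?thesis using d1 e by simp
qed

lemma D_sign:
  assumes "R > 1" "h > 0" "x > 0"
  shows "(x\<^sup>2+h\<^sup>2+R)\<^sup>2 < R*((R+1)\<^sup>2+4*h\<^sup>2) \<Longrightarrow> D R h x > 0"
    and "(x\<^sup>2+h\<^sup>2+R)\<^sup>2 > R*((R+1)\<^sup>2+4*h\<^sup>2) \<Longrightarrow> D R h x < 0"
proof -
  have den: "(((1-x)\<^sup>2+h\<^sup>2)*((1+x)\<^sup>2+h\<^sup>2)) * (((R-x)\<^sup>2+h\<^sup>2)*((R+x)\<^sup>2+h\<^sup>2)) > 0"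
    using assms by (intro mult_pos_pos pos_den)
  have f: "4*h*x*(R-1) > 0" using assms by simp
  show "(x\<^sup>2+h\<^sup>2+R)\<^sup>2 < R*((R+1)\<^sup>2+4*h\<^sup>2) \<Longrightarrow> D R h x > 0"
    unfolding D_def using f by (intro divide_pos_pos[OF _ den] mult_pos_pos[OF f]) auto
  show "(x\<^sup>2+h\<^sup>2+R)\<^sup>2 > R*((R+1)\<^sup>2+4*h\<^sup>2) \<Longrightarrow> D R h x < 0"
    unfolding D_def using f by (intro divide_neg_pos[OF _ den] mult_pos_neg[OF f]) auto
qed

lemma G_even: "G R h (-x) = G R h x"
  unfolding G_def
proof -
  have neg: "\<And>a. arctan ((a - - x)/h) = - arctan ((-a - x)/h)"
  proof -
    fix a
    have "(a - - x)/h = - ((-a - x)/h)" by (simp add: add_divide_distrib diff_divide_distrib)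
    then show "arctan ((a - - x)/h) = - arctan ((-a - x)/h)" by (simp add: arctan_minus)
  qed
  show "arctan ((R - - x) / h) - arctan ((1 - - x) / h) + arctan ((- 1 - - x) / h) - arctan ((- R - - x) / h) =
    arctan ((R - x) / h) - arctan ((1 - x) / h) + arctan ((- 1 - x) / h) - arctan ((- R - x) / h)"
    using neg[of R] neg[of 1] neg[of "-1"] neg[of "-R"] by simp
qed

lemma max_lemma:
  fixes g :: "real \<Rightarrow> real" and b :: real
  assumes b: "b \<ge> 0" and ev: "\<And>x. g (-x) = g x"
    and inc: "\<And>u v. 0 \<le> u \<Longrightarrow> u < v \<Longrightarrow> v \<le> b \<Longrightarrow> g u < g v"
    and dec: "\<And>u v. b \<le> u \<Longrightarrow> u < v \<Longrightarrow> g u > g v"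
  shows "maximizers g = {b, -b}"
proof -
  have ga: "g y = g \<bar>y\<bar>" for y using ev[of y] by (cases "y \<ge> 0") auto
  have key: "\<bar>y\<bar> \<noteq> b \<Longrightarrow> g y < g b" for y
  proof -
    assume "\<bar>y\<bar> \<noteq> b"
    then consider "\<bar>y\<bar> < b" | "\<bar>y\<bar> > b" by linarith
    then show "g y < g b"
      by cases (use inc[of "\<bar>y\<bar>" b] dec[of b "\<bar>y\<bar>"] ga[of y] in auto)
  qed
  have le: "g y \<le> g b" for y using key[of y] ga[of y] by (cases "\<bar>y\<bar> = b") auto
  show ?thesis
  proof (rule set_eqI)
    fix x
    have "x \<in> maximizers g \<longleftrightarrow> g b \<le> g x" unfolding maximizers_def using le
      by (auto intro: order_trans)
    also have "\<dots> \<longleftrightarrow> \<bar>x\<bar> = b" using key[of x] ga[of x] by (cases "\<bar>x\<bar> = b") auto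
    also have "\<dots> \<longleftrightarrow> x \<in> {b, -b}" using b by auto
    finally show "x \<in> maximizers g \<longleftrightarrow> x \<in> {b, -b}" .
  qed
qed

lemma G_cont: "h > 0 \<Longrightarrow> continuous_on S (G R h)"
  using G_deriv by (meson DERIV_isCont continuous_at_imp_continuous_on)

lemma G_inc:
  assumes "R > 1" "h > 0" "0 \<le> u" "u < v"
    and "\<And>x. u < x \<Longrightarrow> x < v \<Longrightarrow> (x\<^sup>2+h\<^sup>2+R)\<^sup>2 < R*((R+1)\<^sup>2+4*h\<^sup>2)"
  shows "G R h u < G R h v"
  using assms(4) apply (rule DERIV_pos_imp_increasing_open)
  using G_deriv[OF assms(2)] D_sign(1)[OF assms(1,2)] assms G_cont[OF assms(2)] by force+

lemma G_dec:
  assumes "R > 1" "h > 0" "0 \<le> u" "u < v"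
    and "\<And>x. u < x \<Longrightarrow> x < v \<Longrightarrow> (x\<^sup>2+h\<^sup>2+R)\<^sup>2 > R*((R+1)\<^sup>2+4*h\<^sup>2)"
  shows "G R h u > G R h v"
  using assms(4) apply (rule DERIV_neg_imp_decreasing_open)
  using G_deriv[OF assms(2)] D_sign(2)[OF assms(1,2)] assms G_cont[OF assms(2)] by force+

lemma cond1:
  assumes "R > 1" "h > 0" "h < sqrt (R + (R + 1) * sqrt R)"
  shows "sqrt (R * ((R + 1)\<^sup>2 + 4 * h\<^sup>2)) - (R + h\<^sup>2) > 0"
proof -
  define q where "q = sqrt R"
  have q1: "q > 1" "q^2 = R" using assms(1) unfolding q_def by auto
  have "sqrt (h^2) < sqrt (R + (R+1)*q)" using assms unfolding q_def by simp
  hence "h^2 < R + (R+1)*q" by (simp only: real_sqrt_less_iff)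
  moreover have "R < (R+1)*q"
  proof -
    have "R * 1 < R * q" using q1 assms(1) by (intro mult_strict_left_mono) auto
    moreover have "R*q \<le> (R+1)*q" using q1 by (intro mult_right_mono) auto
    ultimately show ?thesis by simp
  qed
  ultimately have "\<bar>h^2 - R\<bar> < (R+1)*q" unfolding abs_less_iff using zero_le_power2[of h] by linarith
  hence "\<bar>h^2 - R\<bar>^2 < ((R+1)*q)^2" by (intro power_strict_mono) auto
  hence "(h^2 - R)^2 < ((R+1)*q)^2" by simp
  hence "(R + h^2)^2 < R * ((R + 1)\<^sup>2 + 4 * h\<^sup>2)"
    using q1 unfolding power_mult_distrib q1(2) by (simp add: power2_eq_square algebra_simps)
  hence "R + h^2 < sqrt (R * ((R + 1)\<^sup>2 + 4 * h\<^sup>2))" by (rule real_less_rsqrt)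
  thus ?thesis by simp
qed

lemma cond2:
  assumes "R > 1" "h > 0" "h \<ge> sqrt (R + (R + 1) * sqrt R)"
  shows "sqrt (R * ((R + 1)\<^sup>2 + 4 * h\<^sup>2)) - (R + h\<^sup>2) \<le> 0"
proof -
  define q where "q = sqrt R"
  have q1: "q > 1" "q^2 = R" using assms(1) unfolding q_def by auto
  have "sqrt (R + (R+1)*q) \<le> sqrt (h^2)" using assms unfolding q_def by simp
  hence "h^2 \<ge> R + (R+1)*q" by (simp only: real_sqrt_le_iff)
  hence "h^2 - R \<ge> (R+1)*q" by simp
  moreover have "(R+1)*q \<ge> 0" using q1 assms by simp
  ultimately have "(h^2 - R)^2 \<ge> ((R+1)*q)^2" by (rule power_mono)
  hence "(R + h^2)^2 \<ge> R * ((R + 1)\<^sup>2 + 4 * h\<^sup>2)"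
    using q1 unfolding power_mult_distrib q1(2) by (simp add: power2_eq_square algebra_simps)
  hence "sqrt (R * ((R + 1)\<^sup>2 + 4 * h\<^sup>2)) \<le> sqrt ((R + h^2)^2)"
    by (rule real_sqrt_le_mono)
  also have "\<dots> = R + h^2" using assms by simp
  finally have "sqrt (R * ((R + 1)\<^sup>2 + 4 * h\<^sup>2)) \<le> R + h^2" .
  thus ?thesis by simp
qed

theorem mainTheorem8:
  fixes R h :: real
  assumes "R > 1" and "h > 0"
  shows "(h < sqrt (R + (R + 1) * sqrt R) \<longrightarrow>
           maximizers (A_Omega R h) =
             {sqrt (sqrt (R * ((R + 1)\<^sup>2 + 4 * h\<^sup>2)) - (R + h\<^sup>2)),
              - sqrt (sqrt (R * ((R + 1)\<^sup>2 + 4 * h\<^sup>2)) - (R + h\<^sup>2))})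
       \<and> (h \<ge> sqrt (R + (R + 1) * sqrt R) \<longrightarrow> maximizers (A_Omega R h) = {0})"
proof -
  define M where "M = R * ((R + 1)\<^sup>2 + 4 * h\<^sup>2)"
  define c where "c = sqrt M - (R + h\<^sup>2)"
  have AG: "A_Omega R h = G R h" using A_eq[OF assms] by auto
  have Mpos: "M \<ge> 0" using assms unfolding M_def by simp
  have ev: "\<And>x. G R h (-x) = G R h x" by (rule G_even)
  have part1: "maximizers (A_Omega R h) = {sqrt c, - sqrt c}" if cp: "c > 0"
  proof -
    define b where "b = sqrt c"
    have b: "b > 0" "b^2 = c" using cp unfolding b_def by auto
    show ?thesis unfolding AG b_def[symmetric]
    proof (rule max_lemma[where g="G R h", OF _ G_even])
      show "0 \<le> b" using b by simp
    next
      fix u v :: real assume uv: "0 \<le> u" "u < v" "v \<le> b"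
      show "G R h u < G R h v"
      proof (rule G_inc[OF assms uv(1,2)])
        fix x assume x: "u < x" "x < v"
        have "x^2 < b^2" using x uv by (intro power_strict_mono) auto
        hence "x\<^sup>2+h\<^sup>2+R < sqrt M" using b unfolding c_def by simp
        hence "(x\<^sup>2+h\<^sup>2+R)^2 < (sqrt M)^2" using assms by (intro power_strict_mono) auto
        thus "(x\<^sup>2+h\<^sup>2+R)\<^sup>2 < R*((R+1)\<^sup>2+4*h\<^sup>2)" using Mpos unfolding M_def by simp
      qed
    next
      fix u v :: real assume uv: "b \<le> u" "u < v"
      show "G R h u > G R h v"
      proof (rule G_dec[OF assms _ uv(2)])
        show "0 \<le> u" using uv b by simp
        fix x assume x: "u < x" "x < v"
        have "b^2 < x^2" using x uv b by (intro power_strict_mono) auto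
        hence "sqrt M < x\<^sup>2+h\<^sup>2+R" using b unfolding c_def by simp
        hence "(sqrt M)^2 < (x\<^sup>2+h\<^sup>2+R)^2" using Mpos by (intro power_strict_mono) auto
        thus "(x\<^sup>2+h\<^sup>2+R)\<^sup>2 > R*((R+1)\<^sup>2+4*h\<^sup>2)" using Mpos unfolding M_def by simp
      qed
    qed
  qed
  have part2: "maximizers (A_Omega R h) = {0}" if cn: "c \<le> 0"
  proof -
    have "maximizers (G R h) = {0, -0}"
    proof (rule max_lemma[where g="G R h", OF _ G_even])
      fix u v :: real assume uv: "0 \<le> u" "u < v" "v \<le> 0"
      thus "G R h u < G R h v" by simp
    next
      fix u v :: real assume uv: "0 \<le> u" "u < v"
      show "G R h u > G R h v"
      proof (rule G_dec[OF assms uv])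
        fix x assume x: "u < x" "x < v"
        have "0 < x^2" using x uv by simp
        moreover have "sqrt M \<le> R + h\<^sup>2" using cn unfolding c_def by simp
        ultimately have "sqrt M < x\<^sup>2+h\<^sup>2+R" by linarith
        hence "(sqrt M)^2 < (x\<^sup>2+h\<^sup>2+R)^2" using Mpos by (intro power_strict_mono) auto
        thus "(x\<^sup>2+h\<^sup>2+R)\<^sup>2 > R*((R+1)\<^sup>2+4*h\<^sup>2)" using Mpos unfolding M_def by simp
      qed
    qed simp
    thus ?thesis unfolding AG by simp
  qed
  show ?thesis
  proof (intro conjI impI)
    assume "h < sqrt (R + (R + 1) * sqrt R)"
    from cond1[OF assms this] have "c > 0" unfolding c_def M_def .
    from part1[OF this] show "maximizers (A_Omega R h) =
             {sqrt (sqrt (R * ((R + 1)\<^sup>2 + 4 * h\<^sup>2)) - (R + h\<^sup>2)),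
              - sqrt (sqrt (R * ((R + 1)\<^sup>2 + 4 * h\<^sup>2)) - (R + h\<^sup>2))}"
      unfolding c_def M_def .
  next
    assume "h \<ge> sqrt (R + (R + 1) * sqrt R)"
    from cond2[OF assms this] have "c \<le> 0" unfolding c_def M_def .
    from part2[OF this] show "maximizers (A_Omega R h) = {0}" .
  qed
qed

end
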